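(* Let $\Delta=\{x\in\mathbb{R}^n:\ \ell_i(x)\ge0,\ i=1,\dots,d\}$ be a compact $n$-dimensional Delzant polytope with lattice distances $\ell_i(x)=c_i-\langle u_i,x\rangle$ to its facets, and for $x,y\in\Delta$ let $e^{N\varphi(x,y)}=\prod_{i=1}^d\ell_i(y)^{N\ell_i(x)}e^{-N\ell_i(y)}$ (with $0^0=1$), i.e. $\varphi(x,y)=\sum_i\ell_i(x)\log\ell_i(y)-\ell_i(y)$. Let $f,g\in C^\infty(\Delta)$ and $x\in\Delta$ with $f(x)\neq0$ and $x\notin\operatorname{supp}g$. Then there is a constant $c>0$ such that, for all sufficiently large $N$, $$\Big|\int_\Delta e^{N\varphi(x,y)}g(y)\,dy\Big|\le e^{-cN}\Big|\int_\Delta e^{N\varphi(x,y)}f(y)\,dy\Big|.$$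
   Context: A Delzant polytope is a compact convex polytope $\{x:\langle u_i,x\rangle\le c_i\}$ with $u_i\in(\mathbb{Z}^n)^*$ primitive outward facet normals, $c_i\in\mathbb{Z}$, each vertex lying on exactly $n$ facets whose normals form a $\mathbb{Z}$-basis. $dy$ is Lebesgue measure. *)

theory Defs
  imports "HOL-Analysis.Analysis"
begin

definition rvec :: "int^'n \<Rightarrow> real^'n" where
  "rvec w = (\<chi> j. real_of_int (w $ j))"

definition ldist :: "(nat \<Rightarrow> int^'n) \<Rightarrow> (nat \<Rightarrow> int) \<Rightarrow> nat \<Rightarrow> real^'n \<Rightarrow> real" where
  "ldist u c i x = real_of_int (c i) - rvec (u i) \<bullet> x"

definition polytope_of :: "nat \<Rightarrow> (nat \<Rightarrow> int^'n) \<Rightarrow> (nat \<Rightarrow> int) \<Rightarrow> (real^'n) set" where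
  "polytope_of d u c = {x. \<forall>i<d. ldist u c i x \<ge> 0}"

definition primitive :: "int^'n \<Rightarrow> bool" where
  "primitive w \<longleftrightarrow> (\<forall>k::int. \<forall>v::int^'n. w = k *s v \<longrightarrow> k = 1 \<or> k = -1)"

definition int_basis :: "nat set \<Rightarrow> (nat \<Rightarrow> int^'n) \<Rightarrow> bool" where
  "int_basis I u \<longleftrightarrow>
     (\<forall>w::int^'n. \<exists>!a::nat \<Rightarrow> int. (\<forall>j. j \<notin> I \<longrightarrow> a j = 0) \<and> w = (\<Sum>i\<in>I. a i *s u i))"

definition delzant :: "nat \<Rightarrow> (nat \<Rightarrow> int^'n) \<Rightarrow> (nat \<Rightarrow> int) \<Rightarrow> bool" where
  "delzant d u c \<longleftrightarrow>
     (let P = polytope_of d u c in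
       compact P \<and> interior P \<noteq> {} \<and>
       inj_on u {..<d} \<and>
       (\<forall>i<d. primitive (u i)) \<and>
       (\<forall>i<d. {x \<in> P. ldist u c i x = 0} facet_of P) \<and>
       (\<forall>v. v extreme_point_of P \<longrightarrow>
           card {i. i < d \<and> ldist u c i v = 0} = CARD('n) \<and>
           int_basis {i. i < d \<and> ldist u c i v = 0} u))"

text \<open>Power with the convention 0^0 = 1 (Isabelle's powr has 0 powr a = 0).\<close>
definition pow0 :: "real \<Rightarrow> real \<Rightarrow> real" where
  "pow0 t a = (if t = 0 then (if a = 0 then 1 else 0) else t powr a)"

definition expNphi :: "nat \<Rightarrow> (nat \<Rightarrow> int^'n) \<Rightarrow> (nat \<Rightarrow> int) \<Rightarrow> real \<Rightarrow> real^'n \<Rightarrow> real^'n \<Rightarrow> real" where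
  "expNphi d u c N x y =
     (\<Prod>i<d. pow0 (ldist u c i y) (N * ldist u c i x) * exp (- N * ldist u c i y))"

fun dpart :: "'a::real_normed_vector list \<Rightarrow> ('a \<Rightarrow> 'b::real_normed_vector) \<Rightarrow> 'a \<Rightarrow> 'b" where
  "dpart [] F = F"
| "dpart (v # vs) F = (\<lambda>x. vector_derivative (\<lambda>t::real. dpart vs F (x + t *\<^sub>R v)) (at 0))"

definition smooth_on :: "'a::euclidean_space set \<Rightarrow> ('a \<Rightarrow> 'b::real_normed_vector) \<Rightarrow> bool" where
  "smooth_on U F \<longleftrightarrow> open U \<and>
     (\<forall>vs. set vs \<subseteq> Basis \<longrightarrow>
        continuous_on U (dpart vs F) \<and>
        (\<forall>v\<in>Basis. \<forall>x\<in>U. (\<lambda>t::real. dpart vs F (x + t *\<^sub>R v)) differentiable (at 0)))"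

definition smooth_on_closed :: "'a::euclidean_space set \<Rightarrow> ('a \<Rightarrow> 'b::real_normed_vector) \<Rightarrow> bool" where
  "smooth_on_closed K f \<longleftrightarrow> (\<exists>U F. K \<subseteq> U \<and> smooth_on U F \<and> (\<forall>y\<in>K. F y = f y))"

end

theory Submission imports Defs begin
lemma pow0_power:
  assumes "t \<ge> 0"
  shows "pow0 t (real N * a) = pow0 t a ^ N"
proof (cases "t = 0")
  case True
  then show ?thesis by (cases "N = 0") (auto simp: pow0_def)
next
  case False
  then have "t > 0" using assms by simp
  then show ?thesis
    by (simp add: pow0_def powr_powr[symmetric] powr_realpow mult.commute)
qed

lemma factor_le:
  fixes a t :: real
  assumes "a \<ge> 0" "t \<ge> 0"
  shows "pow0 t a * exp (- t) \<le> pow0 a a * exp (- a)"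
    and "pow0 t a * exp (- t) = pow0 a a * exp (- a) \<Longrightarrow> t = a"
    and "pow0 a a * exp (- a) > 0"
proof -
  have lt: "pow0 t a * exp (- t) < pow0 a a * exp (- a)" if "t \<noteq> a"
  proof (cases "a = 0")
    case True
    then have "t > 0" using that assms by simp
    then show ?thesis using True by (simp add: pow0_def)
  next
    case False
    then have a: "a > 0" using assms by simp
    show ?thesis
    proof (cases "t = 0")
      case True
      then show ?thesis using a by (simp add: pow0_def)
    next
      case False
      then have t: "t > 0" using assms by simp
      have "ln t - ln a < (t - a) / a" using ln_diff_less[OF t a that] .
      then have "a * (ln t - ln a) < t - a" using a by (simp add: field_simps)
      then have "a * ln t - t < a * ln a - a" by (simp add: algebra_simps)
      then have "exp (a * ln t - t) < exp (a * ln a - a)" by simp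
      then show ?thesis using a t
        by (simp add: pow0_def powr_def exp_diff exp_minus field_simps mult.commute)
    qed
  qed
  show "pow0 a a * exp (- a) > 0"
    using assms by (simp add: pow0_def)
  show "pow0 t a * exp (- t) \<le> pow0 a a * exp (- a)"
    using lt by (cases "t = a") auto
  show "pow0 t a * exp (- t) = pow0 a a * exp (- a) \<Longrightarrow> t = a"
    using lt by force
qed

lemma pow0_nonneg: "pow0 t a \<ge> 0"
  by (simp add: pow0_def)

lemma expNphi_power:
  assumes "y \<in> polytope_of d u c"
  shows "expNphi d u c (real N) x y = expNphi d u c 1 x y ^ N"
proof -
  have "\<And>i. i < d \<Longrightarrow> ldist u c i y \<ge> 0" using assms by (simp add: polytope_of_def)
  then have "\<And>i. i \<in> {..<d} \<Longrightarrow> pow0 (ldist u c i y) (real N * ldist u c i x) * exp (- real N * ldist u c i y)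
      = (pow0 (ldist u c i y) (1 * ldist u c i x) * exp (- 1 * ldist u c i y)) ^ N"
    by (simp add: pow0_power power_mult_distrib exp_of_nat_mult[symmetric])
  then show ?thesis
    unfolding expNphi_def prod_power_distrib by (rule prod.cong[OF refl])
qed

lemma h_nonneg: "expNphi d u c 1 x y \<ge> 0"
  by (simp add: expNphi_def pow0_nonneg prod_nonneg)

lemma h_pos:
  assumes "x \<in> polytope_of d u c"
  shows "expNphi d u c 1 x x > 0"
  unfolding expNphi_def
proof (intro prod_pos)
  fix i assume "i \<in> {..<d}"
  then have "ldist u c i x \<ge> 0" using assms by (auto simp: polytope_of_def)
  then show "0 < pow0 (ldist u c i x) (1 * ldist u c i x) * exp (- 1 * ldist u c i x)"
    using factor_le(3)[of "ldist u c i x" "ldist u c i x"] by simp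
qed

lemma h_le:
  assumes "x \<in> polytope_of d u c" "y \<in> polytope_of d u c"
  shows "expNphi d u c 1 x y \<le> expNphi d u c 1 x x"
  unfolding expNphi_def using assms factor_le(1)
  by (intro prod_mono) (auto simp: polytope_of_def pow0_nonneg)

lemma h_eq:
  assumes "x \<in> polytope_of d u c" "y \<in> polytope_of d u c"
    and eq: "expNphi d u c 1 x y = expNphi d u c 1 x x"
  shows "\<forall>i<d. ldist u c i y = ldist u c i x"
proof (rule ccontr)
  assume "\<not> ?thesis"
  then obtain j where j: "j < d" "ldist u c j y \<noteq> ldist u c j x" by auto
  define F where "F z i = pow0 (ldist u c i z) (1 * ldist u c i x) * exp (- 1 * ldist u c i z)" for z i
  have nn: "\<And>i. i < d \<Longrightarrow> ldist u c i y \<ge> 0" "\<And>i. i < d \<Longrightarrow> ldist u c i x \<ge> 0"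
    using assms by (auto simp: polytope_of_def)
  have Fle: "\<And>i. i < d \<Longrightarrow> F y i \<le> F x i"
    using factor_le(1) nn unfolding F_def by auto
  have Fpos: "F x i > 0" if "i < d" for i
    using factor_le(3)[OF nn(2)[OF that] nn(2)[OF that]] unfolding F_def by simp
  have Flt: "F y j < F x j"
    using factor_le(1,2)[of "ldist u c j x" "ldist u c j y"] nn[OF j(1)] j unfolding F_def by force
  have R: "(\<Prod>i\<in>{..<d}-{j}. F y i) \<le> (\<Prod>i\<in>{..<d}-{j}. F x i)"
  proof (intro prod_mono conjI)
    fix i assume "i \<in> {..<d}-{j}"
    then show "0 \<le> F y i" "F y i \<le> F x i" using Fle by (auto simp: F_def pow0_nonneg)
  qed
  have Rpos: "(\<Prod>i\<in>{..<d}-{j}. F x i) > 0" by (intro prod_pos) (auto simp: Fpos)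
  have "expNphi d u c 1 x y = F y j * (\<Prod>i\<in>{..<d}-{j}. F y i)"
    unfolding expNphi_def F_def using j(1) by (subst prod.remove[of _ j]) auto
  also have "\<dots> \<le> F y j * (\<Prod>i\<in>{..<d}-{j}. F x i)"
    using R by (intro mult_left_mono) (auto simp: F_def pow0_nonneg)
  also have "\<dots> < F x j * (\<Prod>i\<in>{..<d}-{j}. F x i)"
    using Flt Rpos by simp
  also have "\<dots> = expNphi d u c 1 x x"
    unfolding expNphi_def F_def using j(1) by (subst prod.remove[of _ j]) auto
  finally show False using eq by simp
qed

lemma ldist_lin:
  "ldist u c i (y + t *\<^sub>R v) = ldist u c i y - t * (rvec (u i) \<bullet> v)"
  by (simp add: ldist_def inner_add_right algebra_simps)

lemma eq_ldist_imp_eq: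
  assumes "compact (polytope_of d u c)" "x \<in> polytope_of d u c" "y \<in> polytope_of d u c"
    and eq: "\<forall>i<d. ldist u c i y = ldist u c i x"
  shows "y = x"
proof (rule ccontr)
  assume ne: "y \<noteq> x"
  define v where "v = y - x"
  have v0: "norm v > 0" using ne by (simp add: v_def)
  have orth: "\<And>i. i < d \<Longrightarrow> rvec (u i) \<bullet> v = 0"
    using eq by (simp add: v_def ldist_def inner_diff_right)
  have inP: "x + t *\<^sub>R v \<in> polytope_of d u c" for t
    using assms(2) orth by (simp add: polytope_of_def ldist_lin)
  obtain B where B: "\<And>z. z \<in> polytope_of d u c \<Longrightarrow> norm z \<le> B"
    using compact_imp_bounded[OF assms(1)] by (auto simp: bounded_iff)
  define t where "t = (B + norm x + 1) / norm v"
  have "t * norm v = B + norm x + 1" using v0 by (simp add: t_def)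
  have "norm (t *\<^sub>R v) \<le> norm (x + t *\<^sub>R v) + norm x"
    by (metis add_diff_cancel_left' norm_triangle_ineq4 add.commute)
  moreover have "norm (t *\<^sub>R v) = B + norm x + 1"
  proof -
    have "B \<ge> 0" using B[OF assms(2)] norm_ge_zero[of x] by linarith
    then show ?thesis using v0 norm_ge_zero[of x] by (simp add: t_def)
  qed
  ultimately have "norm (x + t *\<^sub>R v) \<ge> B + 1" by simp
  with B[OF inP[of t]] show False by simp
qed

lemma pow0_cont:
  assumes "a \<ge> 0" "continuous_on S f" "\<forall>y\<in>S. f y \<ge> 0"
  shows "continuous_on S (\<lambda>y. pow0 (f y) a)"
proof (cases "a = 0")
  case True
  then have "(\<lambda>y. pow0 (f y) a) = (\<lambda>y. 1)" by (auto simp: pow0_def fun_eq_iff)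
  then show ?thesis by (simp only: continuous_on_const)
next
  case False
  then have a: "a > 0" using assms by simp
  have "continuous_on S (\<lambda>y. f y powr a)"
    using assms a by (intro continuous_on_powr') auto
  moreover have "\<And>y. pow0 (f y) a = f y powr a" using a by (simp add: pow0_def)
  ultimately show ?thesis by simp
qed

lemma ldist_cont: "continuous_on S (ldist u c i)"
  unfolding ldist_def by (intro continuous_intros)

lemma h_cont:
  assumes "x \<in> polytope_of d u c"
  shows "continuous_on (polytope_of d u c) (expNphi d u c 1 x)"
  unfolding expNphi_def
proof (intro continuous_on_prod continuous_on_mult)
  fix i assume i: "i \<in> {..<d}"
  show "continuous_on (polytope_of d u c) (\<lambda>y. pow0 (ldist u c i y) (1 * ldist u c i x))"
    using i assms by (intro pow0_cont ldist_cont) (auto simp: polytope_of_def)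
  show "continuous_on (polytope_of d u c) (\<lambda>y. exp (- 1 * ldist u c i y))"
    by (intro continuous_intros ldist_cont)
qed

lemma h_sep:
  assumes "compact (polytope_of d u c)" "x \<in> polytope_of d u c"
    and K: "compact K" "K \<subseteq> polytope_of d u c" "x \<notin> K"
  shows "\<exists>m\<ge>0. m < expNphi d u c 1 x x \<and> (\<forall>y\<in>K. expNphi d u c 1 x y \<le> m)"
proof (cases "K = {}")
  case True
  then show ?thesis using h_pos[OF assms(2)] by auto
next
  case False
  have "continuous_on K (expNphi d u c 1 x)"
    using h_cont[OF assms(2)] K(2) continuous_on_subset by blast
  from continuous_attains_sup[OF K(1) False this]
  obtain y where y: "y \<in> K" "\<forall>z\<in>K. expNphi d u c 1 x z \<le> expNphi d u c 1 x y" by blast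
  have yP: "y \<in> polytope_of d u c" using y K by auto
  have "expNphi d u c 1 x y \<noteq> expNphi d u c 1 x x"
    using h_eq[OF assms(2) yP] eq_ldist_imp_eq[OF assms(1,2) yP] y(1) K(3) by auto
  then have "expNphi d u c 1 x y < expNphi d u c 1 x x"
    using h_le[OF assms(2) yP] by simp
  then show ?thesis using y h_nonneg by blast
qed

lemma convex_P: fixes u :: "nat \<Rightarrow> int^'n" shows "convex (polytope_of d u c)"
  unfolding convex_def polytope_of_def
proof (intro allI impI ballI, clarify)
  fix y z :: "real^'n" and a b :: real and i
  assume y: "\<forall>i<d. 0 \<le> ldist u c i y" and z: "\<forall>i<d. 0 \<le> ldist u c i z"
    and ab: "0 \<le> a" "0 \<le> b" "a + b = 1" and i: "i < d"
  have "ldist u c i (a *\<^sub>R y + b *\<^sub>R z) = a * ldist u c i y + b * ldist u c i z"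
  proof -
    have "real_of_int (c i) = (a + b) * real_of_int (c i)" using ab by simp
    then show ?thesis unfolding ldist_def inner_add_right inner_scaleR_right
      by (simp add: algebra_simps)
  qed
  then show "0 \<le> ldist u c i (a *\<^sub>R y + b *\<^sub>R z)"
    using y z ab i by simp
qed

lemma cont_compact_integrable:
  fixes f :: "'a::euclidean_space \<Rightarrow> 'b::euclidean_space"
  assumes "compact S" "continuous_on S f"
  shows "f integrable_on S"
proof -
  have "integrable lborel (\<lambda>x. indicator S x *\<^sub>R f x)"
    using borel_integrable_compact[OF assms] .
  then have "integrable lebesgue (\<lambda>x. indicator S x *\<^sub>R f x)"
    by (simp add: integrable_completion)
  then have "(\<lambda>x. indicator S x *\<^sub>R f x) integrable_on UNIV"
    by (rule integrable_on_lebesgue)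
  then show ?thesis
    by (simp add: indicator_scaleR_eq_if integrable_restrict_UNIV)
qed

lemma smooth_cont:
  assumes "smooth_on_closed K f"
  shows "continuous_on K f"
proof -
  obtain U F where "K \<subseteq> U" "smooth_on U F" "\<forall>y\<in>K. F y = f y"
    using assms by (auto simp: smooth_on_closed_def)
  moreover have "continuous_on U F"
    using \<open>smooth_on U F\<close> unfolding smooth_on_def by (metis dpart.simps(1) empty_set empty_subsetI)
  ultimately show ?thesis
    using continuous_on_subset continuous_on_cong by metis
qed

lemma final_alg:
  fixes L R m M3 \<alpha> \<beta> \<gamma> s :: real
  assumes "0 \<le> m" "m < M3" "0 < \<alpha>" "0 < s"
    and L: "L \<le> \<gamma> * m ^ N" and R: "\<alpha> * M3 ^ N - \<beta> * m ^ N \<le> R"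
    and e1: "\<beta> * (m / M3) ^ N \<le> \<alpha> / 2" and e2: "\<gamma> * (m / M3 / s) ^ N \<le> \<alpha> / 2"
  shows "L \<le> s ^ N * R"
proof -
  have M3: "M3 > 0" using assms by simp
  have mN: "m ^ N = (m / M3) ^ N * M3 ^ N" using M3 by (simp add: power_divide)
  have mN2: "(m / M3) ^ N = (m / M3 / s) ^ N * s ^ N"
  proof -
    have "m / M3 / s * s = m / M3" using assms by simp
    then show ?thesis by (metis power_mult_distrib)
  qed
  have p: "0 < M3 ^ N" "0 < s ^ N" using M3 assms by simp_all
  have "\<gamma> * m ^ N = (\<gamma> * (m / M3 / s) ^ N) * (s ^ N * M3 ^ N)"
    unfolding mN mN2 by (simp add: algebra_simps)
  also have "\<dots> \<le> (\<alpha> / 2) * (s ^ N * M3 ^ N)"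
    using e2 p by (intro mult_right_mono) auto
  also have "\<dots> \<le> s ^ N * (\<alpha> * M3 ^ N - \<beta> * m ^ N)"
  proof -
    have "\<beta> * m ^ N \<le> (\<alpha> / 2) * M3 ^ N"
      unfolding mN using e1 p by (simp add: mult.assoc[symmetric] mult_right_mono)
    then have "(\<alpha>/2)*M3^N \<le> \<alpha>*M3^N - \<beta>*m^N" by simp
    then have "s^N*((\<alpha>/2)*M3^N) \<le> s^N*(\<alpha>*M3^N - \<beta>*m^N)" using p by (intro mult_left_mono) auto
    then show ?thesis by (simp add: mult.commute mult.left_commute)
  qed
  also have "\<dots> \<le> s ^ N * R" using R p by (intro mult_left_mono) auto
  finally show ?thesis using L by simp
qed

theorem theorem4p2:
  fixes d :: nat and u :: "nat \<Rightarrow> int^'n" and c :: "nat \<Rightarrow> int"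
    and f g :: "real^'n \<Rightarrow> complex" and x :: "real^'n"
  assumes "delzant d u c"
    and "smooth_on_closed (polytope_of d u c) f"
    and "smooth_on_closed (polytope_of d u c) g"
    and "x \<in> polytope_of d u c"
    and "f x \<noteq> 0"
    and "x \<notin> closure {y \<in> polytope_of d u c. g y \<noteq> 0}"
  shows "\<exists>C>0. \<forall>\<^sub>F N in sequentially.
     norm (integral (polytope_of d u c) (\<lambda>y. expNphi d u c (real N) x y *\<^sub>R g y))
       \<le> exp (- C * real N) *
         norm (integral (polytope_of d u c) (\<lambda>y. expNphi d u c (real N) x y *\<^sub>R f y))"
proof -
  define P where "P = polytope_of d u c"
  define h where "h = expNphi d u c 1 x"
  have cP: "compact P" and intP: "interior P \<noteq> {}"
    using assms(1) unfolding delzant_def Let_def P_def by auto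
  have clP: "closed P" using cP compact_imp_closed by blast
  have xP: "x \<in> P" using assms(4) P_def by simp
  have fc: "continuous_on P f" using smooth_cont[OF assms(2)] P_def by simp
  have gc: "continuous_on P g" using smooth_cont[OF assms(3)] P_def by simp
  have hc: "continuous_on P h" using h_cont[OF assms(4)] P_def h_def by simp
  have h0: "\<And>y. h y \<ge> 0" using h_nonneg h_def by metis
  have hx: "h x > 0" using h_pos[OF assms(4)] h_def by simp
  define a0 where "a0 = norm (f x)"
  have a0: "a0 > 0" using assms(5) a0_def by simp
  obtain Kf where Kf: "Kf > 0" "\<And>y. y \<in> P \<Longrightarrow> norm (f y - f x) \<le> Kf"
  proof -
    have "compact ((\<lambda>y. f y - f x) ` P)"
      using fc cP by (intro compact_continuous_image continuous_intros) auto
    then obtain B where "B > 0" "\<forall>z\<in>(\<lambda>y. f y - f x) ` P. norm z \<le> B"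
      using compact_imp_bounded bounded_pos by blast
    then show ?thesis by (intro that[of B]) auto
  qed
  obtain Kg where Kg: "Kg > 0" "\<And>y. y \<in> P \<Longrightarrow> norm (g y) \<le> Kg"
  proof -
    have "compact (g ` P)"
      using gc cP by (intro compact_continuous_image) auto
    then obtain B where "B > 0" "\<forall>z\<in>g ` P. norm z \<le> B"
      using compact_imp_bounded bounded_pos by blast
    then show ?thesis by (intro that[of B]) auto
  qed
  obtain \<rho> where \<rho>: "\<rho> > 0" "\<And>y. y \<in> P \<Longrightarrow> dist y x < \<rho> \<Longrightarrow> norm (f y - f x) \<le> a0 / 2"
  proof -
    from fc xP a0 obtain e where "e > 0" "\<forall>y\<in>P. dist y x < e \<longrightarrow> dist (f y) (f x) < a0 / 2"
      unfolding continuous_on_iff by (meson half_gt_zero)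
    then show ?thesis using that by (auto simp: dist_norm less_imp_le)
  qed
  define K1 where "K1 = closure {y \<in> P. g y \<noteq> 0}"
  have K1P: "K1 \<subseteq> P" unfolding K1_def using clP by (intro closure_minimal) auto
  have K1c: "compact K1" unfolding K1_def
    using K1P cP by (metis K1_def bounded_subset closed_closure compact_eq_bounded_closed)
  have xK1: "x \<notin> K1" using assms(6) K1_def P_def by simp
  obtain M1 where M1: "M1 \<ge> 0" "M1 < h x" "\<And>y. y \<in> K1 \<Longrightarrow> h y \<le> M1"
    using h_sep[OF _ assms(4) K1c _ xK1] cP K1P unfolding P_def h_def by blast
  define K2 where "K2 = P - ball x \<rho>"
  have K2P: "K2 \<subseteq> P" unfolding K2_def by auto
  have K2c: "compact K2" unfolding K2_def
    using cP clP by (meson Diff_subset bounded_subset closed_Diff compact_eq_bounded_closed open_ball)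
  have xK2: "x \<notin> K2" using \<rho> K2_def by simp
  obtain M2 where M2: "M2 \<ge> 0" "M2 < h x" "\<And>y. y \<in> K2 \<Longrightarrow> h y \<le> M2"
    using h_sep[OF _ assms(4) K2c _ xK2] cP K2P unfolding P_def h_def by blast
  define m where "m = max M1 M2"
  define M3 where "M3 = (m + h x) / 2"
  have m: "0 \<le> m" "m < M3" "M3 < h x" "M1 \<le> m" "M2 \<le> m"
    using M1 M2 unfolding m_def M3_def by auto
  obtain r where r: "r > 0" "\<And>y. y \<in> P \<Longrightarrow> dist y x < r \<Longrightarrow> h y \<ge> M3"
  proof -
    from hc xP m obtain e where "e > 0" "\<forall>y\<in>P. dist y x < e \<longrightarrow> dist (h y) (h x) < h x - M3"
      unfolding continuous_on_iff by (metis diff_gt_0_iff_gt)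
    then show ?thesis using that by (fastforce simp: dist_real_def)
  qed
  obtain z where z: "z \<in> interior P" using intP by blast
  define e where "e = min 1 (r / (2 * (norm (x - z) + 1)))"
  have pos2: "2 * (norm (x - z) + 1) > 0" by (smt (verit) norm_ge_zero)
  have e: "0 < e" "e \<le> 1" using r pos2 by (auto simp: e_def)
  define w where "w = x - e *\<^sub>R (x - z)"
  have wP: "w \<in> interior P"
    unfolding w_def P_def using mem_interior_convex_shrink[OF convex_P z[unfolded P_def] assms(4) e] .
  have "dist w x = e * norm (x - z)" by (simp add: w_def dist_norm e(1) less_imp_le)
  also have "\<dots> \<le> (r / (2 * (norm (x - z) + 1))) * norm (x - z)"
    by (intro mult_right_mono) (auto simp: e_def)
  also have "\<dots> < r"
  proof -
    have "norm (x - z) / (2 * (norm (x - z) + 1)) < 1"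
      using pos2 by (simp add: divide_less_eq)
    then have "r * (norm (x - z) / (2 * (norm (x - z) + 1))) < r * 1"
      using r(1) by (intro mult_strict_left_mono) auto
    then show ?thesis by simp
  qed
  finally have wB: "w \<in> ball x r" by (simp add: dist_commute)
  obtain a b where ab: "cbox a b \<subseteq> interior P \<inter> ball x r" "\<forall>i\<in>Basis. a \<bullet> i < b \<bullet> i"
    using open_contains_cbox[of "interior P \<inter> ball x r" w] wP wB by blast
  define m0 where "m0 = measure lborel (cbox a b)"
  have m0: "m0 > 0" using content_pos_lt[OF ab(2)] m0_def by simp
  have boxP: "cbox a b \<subseteq> P" using ab(1) interior_subset by blast
  have boxh: "h y \<ge> M3" if "y \<in> cbox a b" for y
  proof -
    have "y \<in> ball x r" "y \<in> P" using that ab(1) boxP by auto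
    then show ?thesis using r(2) by (simp add: dist_commute)
  qed
  define V where "V = integral P (\<lambda>_. 1::real)"
  have int1: "(\<lambda>_. 1::real) integrable_on P" by (rule cont_compact_integrable[OF cP]) simp
  have V0: "V \<ge> 0" unfolding V_def by (rule integral_nonneg[OF int1]) simp
  have intc: "integral P (\<lambda>_. k) = k * V" for k :: real
    using integral_mult[OF int1, of k] V_def by simp
  have intc': "(\<lambda>_. k::real) integrable_on P" for k
    by (rule cont_compact_integrable[OF cP]) simp
  define \<alpha> where "\<alpha> = a0 / 2 * m0"
  define \<beta> where "\<beta> = Kf * V"
  define \<gamma> where "\<gamma> = Kg * V"
  have \<alpha>: "\<alpha> > 0" unfolding \<alpha>_def using a0 m0 by simp
  have \<beta>: "\<beta> \<ge> 0" using Kf V0 \<beta>_def by simp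
  have \<gamma>: "\<gamma> \<ge> 0" using Kg V0 \<gamma>_def by simp
  have hNc: "continuous_on P (\<lambda>y. h y ^ N)" for N
    using hc by (intro continuous_on_power)
  have inthN: "(\<lambda>y. h y ^ N) integrable_on P" for N
    by (rule cont_compact_integrable[OF cP hNc])
  have hNP: "expNphi d u c (real N) x y = h y ^ N" if "y \<in> P" for N y
    using expNphi_power[of y d u c N x] that unfolding P_def h_def by simp
  have estG: "norm (integral P (\<lambda>y. expNphi d u c (real N) x y *\<^sub>R g y)) \<le> \<gamma> * m ^ N" for N
  proof -
    have eq: "integral P (\<lambda>y. expNphi d u c (real N) x y *\<^sub>R g y) = integral P (\<lambda>y. h y ^ N *\<^sub>R g y)"
      by (rule integral_cong) (simp add: hNP)
    have int: "(\<lambda>y. h y ^ N *\<^sub>R g y) integrable_on P"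
      by (rule cont_compact_integrable[OF cP continuous_on_scaleR[OF hNc gc]])
    have pw: "norm (h y ^ N *\<^sub>R g y) \<le> Kg * M1 ^ N" if y: "y \<in> P" for y
    proof (cases "g y = 0")
      case True
      then show ?thesis using Kg M1 by simp
    next
      case False
      then have "y \<in> K1"
        using subsetD[OF closure_subset, of y "{y \<in> P. g y \<noteq> 0}"] y unfolding K1_def by simp
      then have "h y ^ N \<le> M1 ^ N" using M1(3) h0 by (intro power_mono) auto
      then have "h y ^ N * norm (g y) \<le> M1 ^ N * Kg"
        using Kg(2)[OF y] h0 M1 by (intro mult_mono) auto
      then show ?thesis using h0 by (simp add: mult.commute)
    qed
    have "norm (integral P (\<lambda>y. h y ^ N *\<^sub>R g y)) \<le> integral P (\<lambda>_. Kg * M1 ^ N)"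
      by (rule integral_norm_bound_integral[OF int intc' pw])
    also have "\<dots> = Kg * M1 ^ N * V" by (rule intc)
    also have "\<dots> \<le> Kg * m ^ N * V"
      using M1 m Kg V0 by (intro mult_right_mono mult_left_mono power_mono) auto
    finally show ?thesis using eq by (simp add: \<gamma>_def mult_ac)
  qed
  have estF: "\<alpha> * M3 ^ N - \<beta> * m ^ N \<le> norm (integral P (\<lambda>y. expNphi d u c (real N) x y *\<^sub>R f y))" for N
  proof -
    define I0 where "I0 = integral P (\<lambda>y. h y ^ N)"
    have eq: "integral P (\<lambda>y. expNphi d u c (real N) x y *\<^sub>R f y) = integral P (\<lambda>y. h y ^ N *\<^sub>R f y)"
      by (rule integral_cong) (simp add: hNP)
    have int1': "(\<lambda>y. h y ^ N *\<^sub>R f x) integrable_on P"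
      by (rule cont_compact_integrable[OF cP continuous_on_scaleR[OF hNc continuous_on_const]])
    have int2: "(\<lambda>y. h y ^ N *\<^sub>R (f y - f x)) integrable_on P"
      by (rule cont_compact_integrable[OF cP continuous_on_scaleR[OF hNc continuous_on_diff[OF fc continuous_on_const]]])
    define J where "J = integral P (\<lambda>y. h y ^ N *\<^sub>R (f y - f x))"
    have split: "integral P (\<lambda>y. h y ^ N *\<^sub>R f y) = I0 *\<^sub>R f x + J"
    proof -
      have "integral P (\<lambda>y. h y ^ N *\<^sub>R f y) = integral P (\<lambda>y. h y ^ N *\<^sub>R f x + h y ^ N *\<^sub>R (f y - f x))"
        by (rule integral_cong) (simp add: scaleR_right_diff_distrib)
      also have "\<dots> = integral P (\<lambda>y. h y ^ N *\<^sub>R f x) + J"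
        unfolding J_def by (rule integral_add[OF int1' int2])
      also have "integral P (\<lambda>y. h y ^ N *\<^sub>R f x) = I0 *\<^sub>R f x"
        unfolding I0_def
        by (rule integral_unique[OF has_integral_scaleR_left[OF integrable_integral[OF inthN]]])
      finally show ?thesis .
    qed
    have pw: "norm (h y ^ N *\<^sub>R (f y - f x)) \<le> a0 / 2 * h y ^ N + Kf * M2 ^ N" if y: "y \<in> P" for y
    proof -
      have n: "norm (h y ^ N *\<^sub>R (f y - f x)) = h y ^ N * norm (f y - f x)" using h0 by simp
      have hp: "0 \<le> h y ^ N" using h0 by simp
      have kp: "0 \<le> Kf * M2 ^ N" using Kf M2 by simp
      show ?thesis
      proof (cases "dist y x < \<rho>")
        case True
        have "h y ^ N * norm (f y - f x) \<le> h y ^ N * (a0 / 2)"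
          using \<rho>(2)[OF y True] hp by (intro mult_left_mono) auto
        then have "h y ^ N * norm (f y - f x) \<le> a0 / 2 * h y ^ N" by (simp add: mult.commute)
        then show ?thesis unfolding n using kp by linarith
      next
        case False
        then have "y \<in> K2" using y unfolding K2_def by (simp add: dist_commute)
        then have "h y ^ N \<le> M2 ^ N" using M2(3) h0 by (intro power_mono) auto
        then have "h y ^ N * norm (f y - f x) \<le> M2 ^ N * Kf"
          using Kf(2)[OF y] M2 by (intro mult_mono) auto
        moreover have "0 \<le> a0 / 2 * h y ^ N" using a0 hp by simp
        ultimately show ?thesis unfolding n by (simp add: mult.commute)
      qed
    qed
    have inta: "(\<lambda>y. a0 / 2 * h y ^ N) integrable_on P"
      using integrable_cmul[OF inthN, of "a0/2"] by simp
    have intb: "(\<lambda>y. a0 / 2 * h y ^ N + Kf * M2 ^ N) integrable_on P"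
      by (intro integrable_add inta intc')
    have "norm J \<le> integral P (\<lambda>y. a0 / 2 * h y ^ N + Kf * M2 ^ N)"
      unfolding J_def by (rule integral_norm_bound_integral[OF int2 intb pw])
    also have "\<dots> = a0 / 2 * I0 + Kf * M2 ^ N * V"
    proof -
      have "integral P (\<lambda>y. a0 / 2 * h y ^ N + Kf * M2 ^ N)
          = integral P (\<lambda>y. a0 / 2 * h y ^ N) + integral P (\<lambda>_. Kf * M2 ^ N)"
        by (rule integral_add[OF inta intc'])
      then show ?thesis unfolding I0_def intc by simp
    qed
    finally have Jb: "norm J \<le> a0 / 2 * I0 + Kf * M2 ^ N * V" .
    have I0b: "m0 * M3 ^ N \<le> I0"
    proof -
      have intbox: "(\<lambda>y. h y ^ N) integrable_on cbox a b"
        by (rule cont_compact_integrable[OF compact_cbox continuous_on_subset[OF hNc boxP]])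
      have "integral (cbox a b) (\<lambda>_. M3 ^ N) \<le> integral (cbox a b) (\<lambda>y. h y ^ N)"
        using boxh m by (intro integral_le[OF integrable_const intbox] power_mono) auto
      also have "\<dots> \<le> I0"
        unfolding I0_def using h0 by (intro integral_subset_le[OF boxP intbox inthN]) auto
      finally show ?thesis by (simp add: m0_def)
    qed
    have "norm (I0 *\<^sub>R f x) - norm J \<le> norm (I0 *\<^sub>R f x + J)"
      by (metis norm_diff_ineq)
    moreover have "norm (I0 *\<^sub>R f x) = I0 * a0"
    proof -
      have "I0 \<ge> 0" unfolding I0_def using h0 by (intro integral_nonneg[OF inthN]) auto
      then show ?thesis by (simp add: a0_def)
    qed
    moreover have "Kf * M2 ^ N * V \<le> Kf * m ^ N * V"
      using M2 m Kf V0 by (intro mult_right_mono mult_left_mono power_mono) auto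
    moreover have "a0 / 2 * (m0 * M3 ^ N) \<le> a0 / 2 * I0"
      using I0b a0 by (intro mult_left_mono) auto
    ultimately show ?thesis using Jb unfolding eq split \<alpha>_def \<beta>_def
      by (simp add: algebra_simps)
  qed
  define q where "q = m / M3"
  have q: "0 \<le> q" "q < 1" using m q_def by auto
  define s where "s = (q + 1) / 2"
  have s: "0 < s" "s < 1" "q < s" using q s_def by auto
  define C where "C = - ln s"
  have C: "C > 0" using s C_def by simp
  have expC: "exp (- C * real N) = s ^ N" for N
  proof -
    have "exp (- C * real N) = exp (real N * ln s)" by (simp add: C_def mult.commute)
    also have "\<dots> = exp (ln s) ^ N" by (rule exp_of_nat_mult)
    also have "\<dots> = s ^ N" using s by simp
    finally show ?thesis .
  qed
  have ev1: "\<forall>\<^sub>F N in sequentially. \<beta> * q ^ N < \<alpha> / 2"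
  proof -
    have "(\<lambda>N. \<beta> * q ^ N) \<longlonglongrightarrow> 0"
      using q by (intro tendsto_mult_right_zero LIMSEQ_power_zero) auto
    then show ?thesis using \<alpha> by (intro order_tendstoD(2)) auto
  qed
  have ev2: "\<forall>\<^sub>F N in sequentially. \<gamma> * (q / s) ^ N < \<alpha> / 2"
  proof -
    have "(\<lambda>N. \<gamma> * (q / s) ^ N) \<longlonglongrightarrow> 0"
      using q s by (intro tendsto_mult_right_zero LIMSEQ_power_zero) auto
    then show ?thesis using \<alpha> by (intro order_tendstoD(2)) auto
  qed
  show ?thesis
  proof (intro exI[of _ C] conjI C)
    show "\<forall>\<^sub>F N in sequentially.
     norm (integral (polytope_of d u c) (\<lambda>y. expNphi d u c (real N) x y *\<^sub>R g y))
       \<le> exp (- C * real N) *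
         norm (integral (polytope_of d u c) (\<lambda>y. expNphi d u c (real N) x y *\<^sub>R f y))"
      using ev1 ev2
    proof eventually_elim
      case (elim N)
      show ?case unfolding expC P_def[symmetric]
        by (rule final_alg[OF m(1,2) \<alpha> s(1) estG estF]) (use elim q_def in auto)
    qed
  qed
qed

end
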